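(* Let $K>0$ and let $f$ be an integer-valued polynomial of degree $n\ge1$. Then the number of integers $m$ with $|f(m)|\le K$ is at most $n+4(K\,n!)^{1/n}$. In particular, for any finite set $S\subset\mathbb{Z}$ whose elements all have absolute value at most $K$, the number $E_S(f)$ of integers $m$ with $f(m)\in S$ satisfies $E_S(f)\le (1+4/e)\,n+O(\log n)$, where the implied constant depends only on $K$.
   Context: A polynomial $f\in\mathbb{Q}[x]$ is integer-valued if $f(m)\in\mathbb{Z}$ for every $m\in\mathbb{Z}$. For a finite set $S$, $E_S(f)=\#\{m\in\mathbb{Z}: f(m)\in S\}$. *)

theory Defs
  imports Complex_Main "HOL-Computational_Algebra.Polynomial"
begin

definition integer_valued :: "rat poly \<Rightarrow> bool" where
  "integer_valued f \<longleftrightarrow> (\<forall>m::int. poly f (of_int m) \<in> \<int>)"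

definition E_S :: "int set \<Rightarrow> rat poly \<Rightarrow> nat" where
  "E_S S f = card {m::int. poly f (of_int m) \<in> of_int ` S}"

end

theory Submission
  imports Defs
begin

lemma lagrange_coeff:
  fixes p :: "'a::field poly" and x :: "nat \<Rightarrow> 'a"
  assumes deg: "degree p \<le> n" and inj: "inj_on x {..n}"
  shows "coeff p n = (\<Sum>i\<le>n. poly p (x i) / (\<Prod>l\<in>{..n}-{i}. (x i - x l)))"
proof -
  define Q where "Q i = (\<Prod>l\<in>{..n}-{i}. [:- x l, 1:])" for i
  define d where "d i = (\<Prod>l\<in>{..n}-{i}. (x i - x l))" for i
  define L where "L = (\<Sum>i\<le>n. smult (poly p (x i) / d i) (Q i))"
  have card: "card ({..n}-{i}) = n" if "i \<le> n" for i using that by simp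
  have degQ: "degree (Q i) = n" if "i \<le> n" for i
    unfolding Q_def using that by (subst degree_prod_eq_sum_degree) auto
  have lcQ: "coeff (Q i) n = 1" if "i \<le> n" for i
    using lead_coeff_prod[of "\<lambda>l. [:- x l, 1:]" "{..n}-{i}"] degQ[OF that] unfolding Q_def by simp
  have dnz: "d i \<noteq> 0" if "i \<le> n" for i
    unfolding d_def using inj that by (auto simp: inj_on_def)
  have polyQ: "poly (Q i) (x k) = (if k = i then d i else 0)" if "i \<le> n" "k \<le> n" for i k
  proof (cases "k = i")
    case True then show ?thesis by (simp add: Q_def d_def poly_prod)
  next
    case False
    then have "k \<in> {..n}-{i}" using that by auto
    then have "(\<Prod>l\<in>{..n}-{i}. poly [:- x l, 1:] (x k)) = 0"
      by (intro prod_zero) auto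
    then show ?thesis using False by (simp add: Q_def poly_prod)
  qed
  have polyL: "poly L (x k) = poly p (x k)" if "k \<le> n" for k
  proof -
    have "poly L (x k) = (\<Sum>i\<le>n. poly p (x i) / d i * poly (Q i) (x k))"
      by (simp add: L_def poly_sum)
    also have "\<dots> = (\<Sum>i\<le>n. if i = k then poly p (x k) else 0)"
      by (intro sum.cong refl) (use that dnz in \<open>auto simp: polyQ\<close>)
    also have "\<dots> = poly p (x k)" using that by simp
    finally show ?thesis .
  qed
  have degL: "degree L \<le> n"
    unfolding L_def by (intro degree_sum_le) (auto intro: order.trans[OF degree_smult_le] simp: degQ)
  have "p = L"
  proof (rule poly_eqI_degree[where A = "x ` {..n}"])
    show "card (x ` {..n}) > degree p" using deg inj by (simp add: card_image)
    show "card (x ` {..n}) > degree L" using degL inj by (simp add: card_image)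
  qed (use polyL in auto)
  then have "coeff p n = coeff L n" by simp
  also have "\<dots> = (\<Sum>i\<le>n. poly p (x i) / d i * coeff (Q i) n)"
    by (simp add: L_def coeff_sum)
  also have "\<dots> = (\<Sum>i\<le>n. poly p (x i) / d i)" by (simp add: lcQ)
  finally show ?thesis by (simp add: d_def)
qed

fun cheb :: "nat \<Rightarrow> real poly" where
  "cheb 0 = 1"
| "cheb (Suc 0) = [:0, 1:]"
| "cheb (Suc (Suc n)) = [:0, 2:] * cheb (Suc n) - cheb n"

lemma cheb_cos: "poly (cheb n) (cos t) = cos (real n * t)"
proof (induction n rule: cheb.induct)
  case (3 n)
  have "cos (real (Suc (Suc n)) * t) = cos ((real n + 1) * t + t)" by (simp add: algebra_simps)
  also have "\<dots> = 2 * cos t * cos ((real n + 1) * t) - cos (real n * t)"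
    using cos_add[of "(real n + 1) * t" t] cos_diff[of "(real n + 1) * t" t]
    by (simp add: algebra_simps)
  finally show ?case using 3 by (simp add: algebra_simps)
qed auto

lemma cheb_deg_coeff: "degree (cheb n) \<le> n \<and> coeff (cheb n) n = (if n = 0 then 1 else 2 ^ (n - 1))"
proof (induction n rule: cheb.induct)
  case (3 n)
  have d1: "degree ([:0, 2:] * cheb (Suc n)) \<le> Suc (Suc n)"
    using 3 degree_mult_le[of "[:0, 2:]" "cheb (Suc n)"] by simp
  have "degree (cheb (Suc (Suc n))) \<le> Suc (Suc n)"
    using d1 3 by (simp add: degree_diff_le)
  moreover have "coeff (cheb n) (Suc (Suc n)) = 0"
    using 3 by (intro coeff_eq_0) auto
  moreover have "coeff ([:0, 2:] * cheb (Suc n)) (Suc (Suc n)) = 2 * coeff (cheb (Suc n)) (Suc n)"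
    by simp
  ultimately show ?case using 3 by simp
qed auto

lemma prod_sign:
  fixes x :: "nat \<Rightarrow> real"
  assumes dec: "\<And>l i. l < i \<Longrightarrow> i \<le> n \<Longrightarrow> x i < x l" and "i \<le> n"
  shows "(\<Prod>l\<in>{..n}-{i}. (x i - x l)) = (-1) ^ i * (\<Prod>l\<in>{..n}-{i}. \<bar>x i - x l\<bar>)"
proof -
  have "(\<Prod>l\<in>{..n}-{i}. (x i - x l)) = (\<Prod>l\<in>{..n}-{i}. (if l < i then -1 else 1) * \<bar>x i - x l\<bar>)"
  proof (intro prod.cong refl)
    fix l assume l: "l \<in> {..n}-{i}"
    show "x i - x l = (if l < i then -1 else 1) * \<bar>x i - x l\<bar>"
    proof (cases "l < i")
      case True then show ?thesis using dec[of l i] \<open>i \<le> n\<close> by auto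
    next
      case False then have "i < l" using l by auto
      then show ?thesis using dec[of i l] l by auto
    qed
  qed
  also have "\<dots> = (\<Prod>l\<in>{..n}-{i}. (if l < i then -1 else 1)) * (\<Prod>l\<in>{..n}-{i}. \<bar>x i - x l\<bar>)"
    by (rule prod.distrib)
  also have "(\<Prod>l\<in>{..n}-{i}. (if l < i then -1 else 1)) = (\<Prod>l\<in>{..<i}. (-1::real))"
  proof -
    have "(\<Prod>l\<in>{..n}-{i}. (if l < i then -1 else 1::real)) = (\<Prod>l\<in>({..n}-{i}) \<inter> {l. l < i}. (-1::real))"
      by (subst prod.If_cases) auto
    also have "({..n}-{i}) \<inter> {l. l < i} = {..<i}" using \<open>i \<le> n\<close> by auto
    finally show ?thesis .
  qed
  also have "\<dots> = (-1) ^ i" by simp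
  finally show ?thesis .
qed

lemma cheb_nodes:
  assumes "n \<ge> 1"
  defines "u \<equiv> (\<lambda>i. cos (pi * real i / real n))"
  shows "(\<Sum>i\<le>n. 1 / (\<Prod>l\<in>{..n}-{i}. \<bar>u i - u l\<bar>)) = 2 ^ (n - 1)"
proof -
  have arg: "0 \<le> pi * real i / real n \<and> pi * real i / real n \<le> pi" if "i \<le> n" for i
    using that assms(1) pi_gt_zero by (auto simp: field_simps)
  have dec: "u i < u l" if "l < i" "i \<le> n" for l i
  proof -
    have "pi * real l / real n < pi * real i / real n"
      using that assms(1) pi_gt_zero by (intro divide_strict_right_mono) auto
    then show ?thesis unfolding u_def using arg[of i] arg[of l] that
      by (subst cos_mono_less_eq) auto
  qed
  have inj: "inj_on u {..n}"
  proof (rule inj_onI)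
    fix a b assume "a \<in> {..n}" "b \<in> {..n}" "u a = u b"
    then show "a = b" using dec[of a b] dec[of b a] by (cases a b rule: linorder_cases) auto
  qed
  have "coeff (cheb n) n = (\<Sum>i\<le>n. poly (cheb n) (u i) / (\<Prod>l\<in>{..n}-{i}. (u i - u l)))"
    by (rule lagrange_coeff[OF _ inj]) (use cheb_deg_coeff in auto)
  also have "\<dots> = (\<Sum>i\<le>n. 1 / (\<Prod>l\<in>{..n}-{i}. \<bar>u i - u l\<bar>))"
  proof (intro sum.cong refl)
    fix i assume i: "i \<in> {..n}"
    have "poly (cheb n) (u i) = cos (real i * pi)"
      unfolding u_def cheb_cos using assms(1) by (simp add: field_simps)
    also have "\<dots> = (-1) ^ i" by (rule cos_npi)
    finally show "poly (cheb n) (u i) / (\<Prod>l\<in>{..n}-{i}. (u i - u l)) = 1 / (\<Prod>l\<in>{..n}-{i}. \<bar>u i - u l\<bar>)"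
      using prod_sign[of n u i] dec i by simp
  qed
  finally show ?thesis using cheb_deg_coeff[of n] assms(1) by simp
qed


lemma prod_nat_nodes:
  assumes "i \<le> n"
  shows "(\<Prod>l\<in>{..n}-{i}. (of_nat i - of_nat l :: 'a::field_char_0)) = (-1) ^ (n - i) * fact i * fact (n - i)"
proof -
  have base: "(\<Prod>l\<in>{..<i}. (of_nat i - of_nat l :: 'a)) = fact i"
  proof -
    have "(\<Prod>l\<in>{..<i}. (of_nat i - of_nat l :: 'a)) = of_nat (\<Prod>l\<in>{0..<i}. i - l)"
      by (simp add: of_nat_prod of_nat_diff lessThan_atLeast0)
    also have "\<dots> = fact i" by (simp add: fact_prod_rev)
    finally show ?thesis .
  qed
  have "(\<Prod>l\<in>{..i+k}-{i}. (of_nat i - of_nat l :: 'a)) = (-1) ^ k * fact i * fact k" for k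
  proof (induction k)
    case 0
    have "{..i+0}-{i} = {..<i}" by auto
    then show ?case using base by simp
  next
    case (Suc k)
    have "{..i+Suc k}-{i} = insert (i+Suc k) ({..i+k}-{i})" by auto
    then have "(\<Prod>l\<in>{..i+Suc k}-{i}. (of_nat i - of_nat l :: 'a))
        = (of_nat i - of_nat (i + Suc k)) * (\<Prod>l\<in>{..i+k}-{i}. (of_nat i - of_nat l :: 'a))"
      by simp
    also have "\<dots> = (- of_nat (Suc k)) * ((-1) ^ k * fact i * fact k)"
      using Suc by simp
    also have "\<dots> = (-1) ^ Suc k * fact i * fact (Suc k)" by (simp add: algebra_simps)
    finally show ?case .
  qed
  from this[of "n - i"] show ?thesis using assms by simp
qed

lemma int_valued_lead:
  fixes f :: "rat poly"
  assumes iv: "integer_valued f" and deg: "degree f = n" and n: "n \<ge> 1"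
  shows "1 \<le> fact n * \<bar>coeff f n\<bar>"
proof -
  have "coeff f n = (\<Sum>i\<le>n. poly f (of_nat i) / (\<Prod>l\<in>{..n}-{i}. (of_nat i - of_nat l)))"
    by (rule lagrange_coeff) (auto simp: deg inj_on_def)
  then have "fact n * coeff f n = (\<Sum>i\<le>n. poly f (of_nat i) * (fact n / (\<Prod>l\<in>{..n}-{i}. (of_nat i - of_nat l))))"
    by (simp add: sum_distrib_left algebra_simps)
  also have "\<dots> \<in> \<int>"
  proof (intro Ints_sum Ints_mult)
    fix i assume i: "i \<in> {..n}"
    have "poly f (of_int (int i)) \<in> \<int>" using iv unfolding integer_valued_def by blast
    then show "poly f (of_nat i) \<in> \<int>" by simp
    have "fact n / (\<Prod>l\<in>{..n}-{i}. (of_nat i - of_nat l)) = ((-1) ^ (n - i) * of_nat (n choose i) :: rat)"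
      using i by (auto simp: prod_nat_nodes binomial_fact minus_one_power_iff)
    then show "fact n / (\<Prod>l\<in>{..n}-{i}. (of_nat i - of_nat l)) \<in> (\<int> :: rat set)" by simp
  qed
  finally have "fact n * coeff f n \<in> \<int>" .
  moreover have "coeff f n \<noteq> 0" using deg n by (metis leading_coeff_0_iff degree_0 not_one_le_zero)
  ultimately have "1 \<le> \<bar>fact n * coeff f n\<bar>" by (intro Ints_nonzero_abs_ge1) auto
  then show ?thesis by (simp add: abs_mult)
qed
lemma sorted_gap:
  fixes xs :: "int list"
  assumes "sorted_wrt (<) xs" "j \<le> k" "k < length xs"
  shows "xs ! k - xs ! j \<ge> int (k - j)"
  using assms(2,3)
proof (induction k)
  case 0 then show ?case by simp
next
  case (Suc k)
  show ?case
  proof (cases "j = Suc k")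
    case True then show ?thesis by simp
  next
    case False
    then have "j \<le> k" using Suc by auto
    then have "xs ! k - xs ! j \<ge> int (k - j)" using Suc by auto
    moreover have "xs ! k < xs ! Suc k" using sorted_wrt_nth_less[OF assms(1)] Suc by auto
    ultimately show ?thesis using \<open>j \<le> k\<close> by (simp add: Suc_diff_le)
  qed
qed

lemma cos_nodes_dec:
  assumes "n \<ge> 1" "l < i" "i \<le> n"
  shows "cos (pi * real i / real n) < cos (pi * real l / real n)"
proof -
  have arg: "0 \<le> pi * real i / real n \<and> pi * real i / real n \<le> pi" if "i \<le> n" for i
    using that assms(1) pi_gt_zero by (auto simp: field_simps)
  have "pi * real l / real n < pi * real i / real n"
    using assms pi_gt_zero by (intro divide_strict_right_mono) auto
  then show ?thesis using arg[of i] arg[of l] assms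
    by (subst cos_mono_less_eq) auto
qed

lemma sum_c:
  assumes "n \<ge> 1" "Mr > 0"
  defines "c \<equiv> (\<lambda>i. Mr / 2 * (1 - cos (pi * real i / real n)))"
  shows "(\<Sum>i\<le>n. 1 / (\<Prod>l\<in>{..n}-{i}. \<bar>c i - c l\<bar>)) = (2 / Mr) ^ n * 2 ^ (n - 1)"
proof -
  define u where "u = (\<lambda>i. cos (pi * real i / real n))"
  have "(\<Sum>i\<le>n. 1 / (\<Prod>l\<in>{..n}-{i}. \<bar>c i - c l\<bar>))
      = (\<Sum>i\<le>n. (2 / Mr) ^ n * (1 / (\<Prod>l\<in>{..n}-{i}. \<bar>u i - u l\<bar>)))"
  proof (intro sum.cong refl)
    fix i assume i: "i \<in> {..n}"
    have "(\<Prod>l\<in>{..n}-{i}. \<bar>c i - c l\<bar>) = (\<Prod>l\<in>{..n}-{i}. (Mr / 2) * \<bar>u i - u l\<bar>)"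
    proof (intro prod.cong refl)
      fix l
      have "c i - c l = (Mr / 2) * (u l - u i)" by (simp add: c_def u_def algebra_simps)
      then show "\<bar>c i - c l\<bar> = (Mr / 2) * \<bar>u i - u l\<bar>"
        using assms(2) by (simp only: abs_mult abs_minus_commute[of "u l"])
    qed
    also have "\<dots> = (Mr / 2) ^ n * (\<Prod>l\<in>{..n}-{i}. \<bar>u i - u l\<bar>)"
      using i by (simp only: prod.distrib prod_constant card_Diff_singleton) simp
    finally show "1 / (\<Prod>l\<in>{..n}-{i}. \<bar>c i - c l\<bar>) = (2 / Mr) ^ n * (1 / (\<Prod>l\<in>{..n}-{i}. \<bar>u i - u l\<bar>))"
      by (simp add: power_divide)
  qed
  also have "\<dots> = (2 / Mr) ^ n * (\<Sum>i\<le>n. 1 / (\<Prod>l\<in>{..n}-{i}. \<bar>u i - u l\<bar>))"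
    by (simp add: sum_distrib_left)
  also have "\<dots> = (2 / Mr) ^ n * 2 ^ (n - 1)"
    unfolding u_def by (subst cheb_nodes[OF assms(1)]) simp
  finally show ?thesis .
qed
lemma of_rat_abs': "real_of_rat \<bar>q\<bar> = \<bar>real_of_rat q\<bar>"
  by (cases "0 \<le> q") (auto simp: of_rat_minus)
lemma of_rat_fact': "real_of_rat (fact n) = fact n"
  by (metis of_rat_of_nat_eq of_nat_fact)

lemma final_ineq:
  fixes a K Mr :: real
  assumes a1: "1 \<le> fact n * \<bar>a\<bar>" and abound: "\<bar>a\<bar> \<le> K * ((2 / Mr) ^ n * 2 ^ (n - 1))"
    and Mr: "Mr > 0" and K: "K > 0" and n: "n \<ge> 1"
  shows "Mr \<le> 4 * (K * fact n) powr (1 / real n)"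
proof -
  have "(2::real) ^ (n - 1) \<le> 2 ^ n" by (intro power_increasing) auto
  then have "K * ((2 / Mr) ^ n * 2 ^ (n - 1)) \<le> K * ((2 / Mr) ^ n * 2 ^ n)"
    using K Mr by (intro mult_left_mono) auto
  then have "fact n * \<bar>a\<bar> \<le> fact n * (K * ((2 / Mr) ^ n * 2 ^ n))"
    using abound by (intro mult_left_mono) auto
  then have "1 \<le> fact n * (K * ((2 / Mr) ^ n * 2 ^ n))" using a1 by linarith
  also have "(2 / Mr) ^ n * 2 ^ n = 4 ^ n / Mr ^ n"
    by (simp add: power_divide power_mult_distrib[symmetric])
  finally have "1 \<le> fact n * K * 4 ^ n / Mr ^ n" by simp
  then have "Mr ^ n \<le> K * fact n * 4 ^ n" using Mr by (simp add: divide_simps mult_ac)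
  then have "(Mr ^ n) powr (1 / real n) \<le> (K * fact n * 4 ^ n) powr (1 / real n)"
    using Mr by (intro powr_mono2) auto
  moreover have "(Mr ^ n) powr (1 / real n) = Mr"
    using Mr n by (subst powr_realpow[of Mr n, symmetric]) (simp_all add: powr_powr)
  moreover have "(K * fact n * 4 ^ n) powr (1 / real n) = (K * fact n) powr (1 / real n) * 4"
  proof -
    have "((4::real) ^ n) powr (1 / real n) = 4"
      using n by (subst powr_realpow[of 4 n, symmetric]) (simp_all add: powr_powr)
    then show ?thesis using K by (simp add: powr_mult)
  qed
  ultimately show ?thesis by simp
qed
lemma count_bound:
  fixes f :: "rat poly" and K :: real
  assumes iv: "integer_valued f" and deg: "degree f = n" and n: "n \<ge> 1" and K: "K > 0"
    and finA: "finite A" and sub: "A \<subseteq> {m::int. \<bar>real_of_rat (poly f (of_int m))\<bar> \<le> K}"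
  shows "real (card A) \<le> real n + 4 * (K * fact n) powr (1 / real n)"
proof (cases "card A \<le> n")
  case True
  then show ?thesis by (smt (verit) of_nat_mono powr_ge_zero)
next
  case False
  define N where "N = card A"
  define M where "M = N - n"
  define Mr where "Mr = real M"
  have M1: "M \<ge> 1" and NM: "N = M + n" using False by (auto simp: M_def N_def)
  have Mr: "Mr > 0" using M1 by (simp add: Mr_def)
  define u where "u = (\<lambda>i. cos (pi * real i / real n))"
  define c where "c = (\<lambda>i. Mr / 2 * (1 - u i))"
  define jj where "jj = (\<lambda>i. if i = 0 then 0 else nat (ceiling (c i)) + i - 1)"
  define ys where "ys = sorted_list_of_set A"
  define x where "x = (\<lambda>i. ys ! jj i)"
  have lenys: "length ys = N" using finA by (simp add: ys_def N_def)
  have setys: "set ys = A" using finA by (simp add: ys_def)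
  have sortys: "sorted_wrt (<) ys" by (simp add: ys_def)
  have c0: "c 0 = 0" by (simp add: c_def u_def)
  have cn: "c n = Mr" using n by (simp add: c_def u_def)
  have cinc: "c l < c i" if "l < i" "i \<le> n" for l i
    using cos_nodes_dec[OF n that] Mr by (simp add: c_def u_def)
  have cge0: "c i \<ge> 0" if "i \<le> n" for i
    using cinc[of 0 i] that c0 by (cases "i = 0") auto
  have jjgap: "real (jj i) - real (jj l) \<ge> c i - c l" if "l < i" "i \<le> n" for l i
  proof (cases "l = 0")
    case True
    have "real (jj i) = real_of_int (ceiling (c i)) + real i - 1"
      using that cge0[of i] by (simp add: jj_def of_nat_diff)
    moreover have "c i \<le> real_of_int (ceiling (c i))" by linarith
    moreover have "real i \<ge> 1" using that by simp
    moreover have "real (jj l) = 0" using True by (simp add: jj_def)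
    moreover have "c l = 0" using True c0 by simp
    ultimately show ?thesis by linarith
  next
    case False
    have "real (jj i) = real_of_int (ceiling (c i)) + real i - 1"
      using that cge0[of i] by (simp add: jj_def of_nat_diff)
    moreover have "real (jj l) = real_of_int (ceiling (c l)) + real l - 1"
      using that False cge0[of l] by (simp add: jj_def of_nat_diff)
    moreover have "real_of_int (ceiling (c l)) < c l + 1" by linarith
    moreover have "c i \<le> real_of_int (ceiling (c i))" by linarith
    moreover have "real l + 1 \<le> real i" using that by simp
    ultimately show ?thesis by linarith
  qed
  have jjn: "jj n = N - 1"
  proof -
    have "ceiling (c n) = int M" using cn by (simp add: Mr_def)
    then show ?thesis using n NM by (simp add: jj_def)
  qed
  have jjlt: "jj i < N" if "i \<le> n" for i
  proof (cases "i = n")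
    case True then show ?thesis using jjn NM M1 by simp
  next
    case False
    then have "real (jj n) - real (jj i) > 0" using jjgap[of i n] cinc[of i n] that by simp
    then show ?thesis using jjn NM M1 by simp
  qed
  have xA: "x i \<in> A" if "i \<le> n" for i
    using jjlt[OF that] lenys setys by (auto simp: x_def)
  have xgap: "\<bar>real_of_int (x i) - real_of_int (x l)\<bar> \<ge> \<bar>c i - c l\<bar>" if "i \<le> n" "l \<le> n" for i l
  proof -
    have *: "real_of_int (x i) - real_of_int (x l) \<ge> c i - c l" if "l < i" "i \<le> n" for i l
    proof -
      have "jj l \<le> jj i" using jjgap[OF that] cinc[OF that] by simp
      then have "x i - x l \<ge> int (jj i - jj l)"
        unfolding x_def using sorted_gap[OF sortys, of "jj l" "jj i"] jjlt[OF that(2)] lenys by simp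
      then have "real_of_int (x i - x l) \<ge> real (jj i - jj l)" by linarith
      then show ?thesis using jjgap[OF that] \<open>jj l \<le> jj i\<close> by (simp add: of_nat_diff)
    qed
    show ?thesis
    proof (cases i l rule: linorder_cases)
      case less then show ?thesis using *[of i l] cinc[of i l] that by simp
    next
      case greater then show ?thesis using *[of l i] cinc[of l i] that by simp
    qed simp
  qed
  have cne: "\<bar>c i - c l\<bar> > 0" if "i \<le> n" "l \<le> n" "i \<noteq> l" for i l
    using cinc[of i l] cinc[of l i] that by (cases i l rule: linorder_cases) auto
  have injx: "inj_on (\<lambda>i. (of_int (x i) :: rat)) {..n}"
  proof (rule inj_onI)
    fix i l assume "i \<in> {..n}" "l \<in> {..n}" "(of_int (x i) :: rat) = of_int (x l)"
    then show "i = l" using xgap[of i l] cne[of i l] by (cases "i = l") auto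
  qed
  have lag: "coeff f n = (\<Sum>i\<le>n. poly f (of_int (x i)) / (\<Prod>l\<in>{..n}-{i}. (of_int (x i) - of_int (x l))))"
    by (rule lagrange_coeff[OF _ injx]) (simp add: deg)
  define a where "a = real_of_rat (coeff f n)"
  define g where "g = (\<lambda>i. real_of_rat (poly f (of_int (x i))))"
  have lagr: "a = (\<Sum>i\<le>n. g i / (\<Prod>l\<in>{..n}-{i}. (real_of_int (x i) - real_of_int (x l))))"
    unfolding a_def g_def lag by (simp add: of_rat_sum of_rat_divide of_rat_prod of_rat_diff)
  have gK: "\<bar>g i\<bar> \<le> K" if "i \<le> n" for i using sub xA[OF that] by (auto simp: g_def)
  have "\<bar>a\<bar> \<le> (\<Sum>i\<le>n. \<bar>g i / (\<Prod>l\<in>{..n}-{i}. (real_of_int (x i) - real_of_int (x l)))\<bar>)"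
    unfolding lagr by (rule sum_abs)
  also have "\<dots> \<le> (\<Sum>i\<le>n. K * (1 / (\<Prod>l\<in>{..n}-{i}. \<bar>c i - c l\<bar>)))"
  proof (intro sum_mono)
    fix i assume i: "i \<in> {..n}"
    have P: "(\<Prod>l\<in>{..n}-{i}. \<bar>c i - c l\<bar>) \<le> (\<Prod>l\<in>{..n}-{i}. \<bar>real_of_int (x i) - real_of_int (x l)\<bar>)"
      by (intro prod_mono) (use xgap i in auto)
    have P0: "(\<Prod>l\<in>{..n}-{i}. \<bar>c i - c l\<bar>) > 0"
      by (intro prod_pos) (use cne i in auto)
    have "\<bar>g i / (\<Prod>l\<in>{..n}-{i}. (real_of_int (x i) - real_of_int (x l)))\<bar>
        = \<bar>g i\<bar> / (\<Prod>l\<in>{..n}-{i}. \<bar>real_of_int (x i) - real_of_int (x l)\<bar>)"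
      by (simp add: abs_prod)
    also have "\<dots> \<le> K / (\<Prod>l\<in>{..n}-{i}. \<bar>c i - c l\<bar>)"
      by (intro frac_le) (use gK i P P0 K in auto)
    finally show "\<bar>g i / (\<Prod>l\<in>{..n}-{i}. (real_of_int (x i) - real_of_int (x l)))\<bar>
        \<le> K * (1 / (\<Prod>l\<in>{..n}-{i}. \<bar>c i - c l\<bar>))" by simp
  qed
  also have "\<dots> = K * ((2 / Mr) ^ n * 2 ^ (n - 1))"
    unfolding sum_distrib_left[symmetric] c_def u_def by (subst sum_c[OF n Mr]) simp
  finally have abound: "\<bar>a\<bar> \<le> K * ((2 / Mr) ^ n * 2 ^ (n - 1))" .
  have "1 \<le> fact n * \<bar>coeff f n\<bar>" by (rule int_valued_lead[OF iv deg n])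
  then have "real_of_rat 1 \<le> real_of_rat (fact n * \<bar>coeff f n\<bar>)"
    by (simp only: of_rat_less_eq)
  moreover have "real_of_rat (fact n * \<bar>coeff f n\<bar>) = fact n * \<bar>a\<bar>"
    unfolding a_def of_rat_mult of_rat_abs' of_rat_fact' ..
  ultimately have a1: "1 \<le> fact n * \<bar>a\<bar>" by simp
  have "Mr \<le> 4 * (K * fact n) powr (1 / real n)"
    by (rule final_ineq[OF a1 abound Mr K n])
  moreover have "real (card A) = Mr + real n" using NM by (simp add: N_def Mr_def)
  ultimately show ?thesis by linarith
qed

lemma ln_fact_le:
  assumes "n \<ge> 1"
  shows "ln (fact n) \<le> 1 + (real n + 1) * ln (real n) - real n"
  using assms
proof (induction n rule: nat_induct_at_least)
  case base then show ?case by simp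
next
  case (Suc n)
  have n0: "real n > 0" using Suc by simp
  have "ln (real n / (real n + 1)) \<le> real n / (real n + 1) - 1"
    using n0 by (intro ln_le_minus_one) auto
  then have key: "ln (real n) - ln (real n + 1) \<le> - 1 / (real n + 1)"
    using n0 by (simp add: ln_div field_simps)
  have "ln (fact (Suc n)) = ln (real n + 1) + ln (fact n)"
    by (simp add: ln_mult add.commute)
  also have "\<dots> \<le> ln (real n + 1) + 1 + (real n + 1) * ln (real n) - real n"
    using Suc by simp
  also have "\<dots> \<le> 1 + (real (Suc n) + 1) * ln (real (Suc n)) - real (Suc n)"
  proof -
    have "(real n + 1) * (ln (real n) - ln (real n + 1)) \<le> (real n + 1) * (- 1 / (real n + 1))"
      using key n0 by (intro mult_left_mono) auto
    then have "(real n + 1) * ln (real n) \<le> (real n + 1) * ln (real n + 1) - 1"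
      using n0 by (simp add: algebra_simps)
    then show ?thesis by (simp add: algebra_simps)
  qed
  finally show ?case .
qed

lemma asym_bound:
  fixes K :: real
  assumes K: "K > 0"
  shows "\<exists>C. \<forall>n::nat. n \<ge> 2 \<longrightarrow>
     real n + 4 * (K * fact n) powr (1 / real n) \<le> (1 + 4 / exp 1) * real n + C * ln (real n)"
proof -
  define b where "b = \<bar>ln (K * exp 1)\<bar>"
  define D where "D = exp (b + 1)"
  define C where "C = 4 / exp 1 * (D * (b / ln 2 + 1))"
  have b0: "b \<ge> 0" by (simp add: b_def)
  have D0: "D > 0" by (simp add: D_def)
  show ?thesis
  proof (intro exI allI impI)
    fix n :: nat assume n2: "n \<ge> 2"
    have n0: "real n > 0" using n2 by simp
    have lnn: "ln (real n) \<ge> ln 2" using n2 by (subst ln_le_cancel_iff) auto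
    have ln2: "ln (2::real) > 0" by simp
    have lnn0: "ln (real n) \<ge> 0" using n2 by simp
    have lnn_le: "ln (real n) \<le> real n" using ln_le_minus_one[OF n0] by simp
    define L where "L = ln (K * exp 1) + ln (real n)"
    define z where "z = L / real n"
    have "(K * fact n) powr (1 / real n) = exp (ln (K * fact n) / real n)"
      using K by (simp add: powr_def)
    also have "ln (K * fact n) = ln K + ln (fact n)" using K by (simp add: ln_mult)
    also have "exp ((ln K + ln (fact n)) / real n) \<le> exp ((ln K + 1 + (real n + 1) * ln (real n) - real n) / real n)"
      using ln_fact_le[of n] n2 n0 by (intro exp_le_cancel_iff[THEN iffD2] divide_right_mono) auto
    also have "(ln K + 1 + (real n + 1) * ln (real n) - real n) / real n = (ln (real n) - 1) + z"
      using n0 K by (simp add: z_def L_def ln_mult field_simps)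
    also have "exp ((ln (real n) - 1) + z) = real n / exp 1 * exp z"
      using n0 by (simp add: exp_add exp_diff)
    finally have P: "(K * fact n) powr (1 / real n) \<le> real n / exp 1 * exp z" .
    have Q: "real n * (exp z - 1) \<le> D * (b / ln 2 + 1) * ln (real n)"
    proof (cases "z \<le> 0")
      case True
      then have "exp z - 1 \<le> 0" by simp
      then have "real n * (exp z - 1) \<le> 0" using n0 by (simp add: mult_nonneg_nonpos)
      moreover have "0 \<le> D * (b / ln 2 + 1) * ln (real n)"
        using D0 b0 lnn0 ln2 by (intro mult_nonneg_nonneg) auto
      ultimately show ?thesis by linarith
    next
      case False
      have e1: "exp z - 1 \<le> z * exp z"
      proof -
        have "1 - z \<le> exp (- z)" using exp_ge_add_one_self[of "-z"] by simp
        then have "(1 - z) * exp z \<le> exp (-z) * exp z" by (intro mult_right_mono) auto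
        then show ?thesis by (simp add: exp_minus field_simps)
      qed
      have nz: "real n * z = L" using n0 by (simp add: z_def)
      have Lb: "L \<le> b + ln (real n)" by (simp add: L_def b_def)
      have zb: "z \<le> b + 1"
      proof -
        have "L \<le> b + real n" using Lb lnn_le by linarith
        also have "\<dots> \<le> real n * b + real n"
          using b0 n2 mult_right_mono[of 1 "real n" b] by simp
        finally show ?thesis using n0 by (simp add: z_def field_simps)
      qed
      have ez: "exp z \<le> D" using zb by (simp add: D_def)
      have L0: "L \<ge> 0" using False n0 nz by (metis less_eq_real_def linorder_not_le mult_pos_pos)
      have "real n * (exp z - 1) \<le> real n * (z * exp z)" using e1 n0 by (intro mult_left_mono) auto
      also have "\<dots> = L * exp z" using nz by simp
      also have "\<dots> \<le> (b + ln (real n)) * D"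
        using Lb ez b0 lnn0 by (intro mult_mono) auto
      also have "b + ln (real n) \<le> (b / ln 2 + 1) * ln (real n)"
      proof -
        have "1 \<le> ln (real n) / ln 2" using lnn ln2 by simp
        then have "b * 1 \<le> b * (ln (real n) / ln 2)" using b0 by (intro mult_left_mono) auto
        then show ?thesis by (simp add: algebra_simps)
      qed
      finally show ?thesis using D0 by (simp add: algebra_simps)
    qed
    have "real n + 4 * (K * fact n) powr (1 / real n) \<le> real n + 4 * (real n / exp 1 * exp z)"
      using P by simp
    also have "\<dots> = (1 + 4 / exp 1) * real n + 4 / exp 1 * (real n * (exp z - 1))"
      by (simp add: algebra_simps)
    also have "\<dots> \<le> (1 + 4 / exp 1) * real n + 4 / exp 1 * (D * (b / ln 2 + 1) * ln (real n))"
      using Q by (intro add_left_mono mult_left_mono) auto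
    also have "\<dots> = (1 + 4 / exp 1) * real n + C * ln (real n)"
      by (simp add: C_def)
    finally show "real n + 4 * (K * fact n) powr (1 / real n) \<le> (1 + 4 / exp 1) * real n + C * ln (real n)" .
  qed
qed

theorem mainTheorem8:
  fixes K :: real
  assumes "K > 0"
  shows "(\<forall>f n. integer_valued f \<and> degree f = n \<and> n \<ge> 1 \<longrightarrow>
            finite {m::int. \<bar>real_of_rat (poly f (of_int m))\<bar> \<le> K} \<and>
            real (card {m::int. \<bar>real_of_rat (poly f (of_int m))\<bar> \<le> K})
              \<le> real n + 4 * (K * fact n) powr (1 / real n))
       \<and> (\<exists>C::real. \<forall>f n S. integer_valued f \<and> degree f = n \<and> n \<ge> 2 \<and>
            finite S \<and> (\<forall>s\<in>S. real_of_int \<bar>s\<bar> \<le> K) \<longrightarrow>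
            real (E_S S f) \<le> (1 + 4 / exp 1) * real n + C * ln (real n))"
proof -
  have part1: "finite {m::int. \<bar>real_of_rat (poly f (of_int m))\<bar> \<le> K} \<and>
            real (card {m::int. \<bar>real_of_rat (poly f (of_int m))\<bar> \<le> K})
              \<le> real n + 4 * (K * fact n) powr (1 / real n)"
    if H: "integer_valued f" "degree f = n" "n \<ge> 1" for f n
  proof -
    define T where "T = {m::int. \<bar>real_of_rat (poly f (of_int m))\<bar> \<le> K}"
    define B where "B = real n + 4 * (K * fact n) powr (1 / real n)"
    have bnd: "real (card A) \<le> B" if "finite A" "A \<subseteq> T" for A
      unfolding B_def by (rule count_bound[OF H assms that(1)]) (use that in \<open>simp add: T_def\<close>)
    have fin: "finite T"
    proof (rule ccontr)
      assume "infinite T"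
      then obtain A where A: "finite A" "card A = nat (ceiling B) + 1" "A \<subseteq> T"
        using infinite_arbitrarily_large by blast
      have "real (card A) \<le> B" by (rule bnd[OF A(1) A(3)])
      moreover have "real (nat (ceiling B)) \<ge> B" by (rule real_nat_ceiling_ge)
      ultimately show False using A(2) by simp
    qed
    show ?thesis using fin bnd[OF fin] by (simp add: T_def B_def)
  qed
  obtain C where C: "\<And>n::nat. n \<ge> 2 \<Longrightarrow>
     real n + 4 * (K * fact n) powr (1 / real n) \<le> (1 + 4 / exp 1) * real n + C * ln (real n)"
    using asym_bound[OF assms] by blast
  have part2: "real (E_S S f) \<le> (1 + 4 / exp 1) * real n + C * ln (real n)"
    if H: "integer_valued f" "degree f = n" "n \<ge> 2" "finite S" "\<forall>s\<in>S. real_of_int \<bar>s\<bar> \<le> K"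
    for f n S
  proof -
    have n1: "n \<ge> 1" using H(3) by simp
    have sub: "{m::int. poly f (of_int m) \<in> of_int ` S} \<subseteq> {m::int. \<bar>real_of_rat (poly f (of_int m))\<bar> \<le> K}"
    proof
      fix m assume "m \<in> {m::int. poly f (of_int m) \<in> of_int ` S}"
      then obtain s where s: "s \<in> S" "poly f (of_int m) = of_int s" by auto
      have "real_of_rat (poly f (of_int m)) = real_of_int s" using s(2) by simp
      then have "\<bar>real_of_rat (poly f (of_int m))\<bar> \<le> K" using H(5) s(1) by (metis of_int_abs)
      then show "m \<in> {m::int. \<bar>real_of_rat (poly f (of_int m))\<bar> \<le> K}" by (simp only: mem_Collect_eq)
    qed
    have "E_S S f \<le> card {m::int. \<bar>real_of_rat (poly f (of_int m))\<bar> \<le> K}"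
      unfolding E_S_def using part1[OF H(1,2) n1] sub by (intro card_mono) auto
    then have "real (E_S S f) \<le> real n + 4 * (K * fact n) powr (1 / real n)"
      using part1[OF H(1,2) n1] by linarith
    also have "\<dots> \<le> (1 + 4 / exp 1) * real n + C * ln (real n)" by (rule C[OF H(3)])
    finally show ?thesis .
  qed
  show ?thesis using part1 part2 by blast
qed

end
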